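(* Let $\bm y=\bm X\bm\beta+\bm z$, where $\bm X\in\mathbb{R}^{n\times p}$ is deterministic of full column rank with unit-norm columns $\bm x_1,\dots,\bm x_p$, $\bm\beta\in\mathbb{R}^p$, and $\bm z\sim N_n(\bm 0,\sigma^2\bm I_n)$. Let $\bm\Sigma=\bm X^\top\bm X$ and, for a fixed $\lambda>0$, $\bm\Sigma_\lambda=\bm\Sigma+\lambda\bm I_p$. Let $\bm s\in\mathbb{R}^p$ have nonnegative entries with $\bm\Sigma-\bm S$ positive semidefinite, where $\bm S=\operatorname{diag}(\bm s)$, and let $\widetilde{\bm X}=[\widetilde{\bm x}_1,\dots,\widetilde{\bm x}_p]\in\mathbb{R}^{n\times p}$ be a fixed (non-random) matrix satisfying $\widetilde{\bm X}^\top\bm X=\bm\Sigma-\bm S$ and $\widetilde{\bm x}_j^\top\widetilde{\bm x}_j=1$ for all $j\in[p]$. Define $\widehat{\bm\beta}_\lambda=\bm\Sigma_\lambda^{-1}\bm X^\top\bm y$ and $\widetilde{\bm\beta}_\lambda\in\mathbb{R}^p$ by $\widetilde\beta_{\lambda j}=\widehat\beta_{\lambda j}+[\bm\Sigma_\lambda^{-1}]_{jj}(\widetilde{\bm x}_j^\top\bm y-\bm x_j^\top\bm y)$, $j\in[p]$. Then $(\widehat{\bm\beta}_\lambda,\widetilde{\bm\beta}_\lambda)$ is jointly Gaussian in $\mathbb{R}^{2p}$ with $\mathbb{E}[\widehat{\bm\beta}_\lambda]=\bm\Sigma_\lambda^{-1}\bm\Sigma\bm\beta$, $\mathbb{E}[\widetilde{\bm\beta}_\lambda]=(\bm\Sigma_\lambda^{-1}\bm\Sigma-\operatorname{diag}\{\bm\Sigma_\lambda^{-1}\}\bm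 S)\bm\beta$, $\mathrm{Cov}[\widehat{\bm\beta}_\lambda]=\sigma^2\bm\Sigma_\lambda^{-1}\bm\Sigma\bm\Sigma_\lambda^{-1}$, $\mathrm{Cov}[\widetilde{\bm\beta}_\lambda]=\sigma^2\big[\bm\Sigma_\lambda^{-1}\bm\Sigma\bm\Sigma_\lambda^{-1}-\bm\Sigma_\lambda^{-1}\bm S\operatorname{diag}\{\bm\Sigma_\lambda^{-1}\}-\operatorname{diag}\{\bm\Sigma_\lambda^{-1}\}\bm S\bm\Sigma_\lambda^{-1}+\operatorname{diag}\{\bm\Sigma_\lambda^{-1}\}(\widetilde{\bm X}^\top\widetilde{\bm X}-\bm\Sigma+2\bm S)\operatorname{diag}\{\bm\Sigma_\lambda^{-1}\}\big]$, and $\mathrm{Cov}[\widetilde{\bm\beta}_\lambda,\widehat{\bm\beta}_\lambda]=\sigma^2(\bm\Sigma_\lambda^{-1}\bm\Sigma\bm\Sigma_\lambda^{-1}-\operatorname{diag}\{\bm\Sigma_\lambda^{-1}\}\bm S\bm\Sigma_\lambda^{-1})$.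
   Context: For a square matrix $\bm A$, $\operatorname{diag}\{\bm A\}$ denotes the diagonal matrix with the same diagonal entries as $\bm A$, and $[\bm A]_{jj}$ its $j$-th diagonal entry. $\mathrm{Cov}[\bm u,\bm v]=\mathbb{E}[(\bm u-\mathbb{E}\bm u)(\bm v-\mathbb{E}\bm v)^\top]$. Equivalently, $\widetilde\beta_{\lambda j}$ is the $j$-th coefficient of the ridge regression (penalty $\lambda$) of $\bm y$ onto $\bm X$ with its $j$-th column replaced by $\widetilde{\bm x}_j$. *)

theory Defs
  imports "HOL-Analysis.Analysis" "HOL-Probability.Probability"
begin

definition diag_mat :: "real^'p \<Rightarrow> real^'p^'p" where
  "diag_mat s = (\<chi> i j. if i = j then s $ i else 0)"

definition diag_part :: "real^'p^'p \<Rightarrow> real^'p^'p" where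
  "diag_part A = (\<chi> i j. if i = j then A $ i $ j else 0)"

definition psd :: "real^'p^'p \<Rightarrow> bool" where
  "psd A \<longleftrightarrow> (\<forall>v. 0 \<le> v \<bullet> (A *v v))"

definition real_gaussian :: "'a measure \<Rightarrow> ('a \<Rightarrow> real) \<Rightarrow> bool" where
  "real_gaussian M X \<longleftrightarrow>
     (X \<in> borel_measurable M \<and> (\<exists>c. AE \<omega> in M. X \<omega> = c)) \<or>
     (\<exists>\<mu> \<sigma>. \<sigma> > 0 \<and> distributed M lborel X (normal_density \<mu> \<sigma>))"

definition jointly_gaussian :: "'a measure \<Rightarrow> ('a \<Rightarrow> real^'p) \<Rightarrow> ('a \<Rightarrow> real^'q) \<Rightarrow> bool" where
  "jointly_gaussian M u v \<longleftrightarrow>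
     (\<forall>a b. real_gaussian M (\<lambda>\<omega>. a \<bullet> u \<omega> + b \<bullet> v \<omega>))"

definition mean_vec :: "'a measure \<Rightarrow> ('a \<Rightarrow> real^'p) \<Rightarrow> real^'p" where
  "mean_vec M u = (\<chi> i. integral\<^sup>L M (\<lambda>\<omega>. u \<omega> $ i))"

definition cov_mat :: "'a measure \<Rightarrow> ('a \<Rightarrow> real^'p) \<Rightarrow> ('a \<Rightarrow> real^'q) \<Rightarrow> real^'q^'p" where
  "cov_mat M u v = (\<chi> i j. integral\<^sup>L M
      (\<lambda>\<omega>. (u \<omega> $ i - mean_vec M u $ i) * (v \<omega> $ j - mean_vec M v $ j)))"

end

theory Submission
  imports Defs
begin

context prob_space begin

lemma zmom:
  fixes z :: "'a \<Rightarrow> real^'n::finite"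
  assumes sp: "\<sigma> > 0"
    and ind: "indep_vars (\<lambda>_. borel) (\<lambda>i \<omega>. z \<omega> $ i) UNIV"
    and D: "\<And>i. distributed M lborel (\<lambda>\<omega>. z \<omega> $ i) (normal_density 0 \<sigma>)"
  shows "integrable M (\<lambda>\<omega>. z \<omega> $ i)" "expectation (\<lambda>\<omega>. z \<omega> $ i) = 0"
    "integrable M (\<lambda>\<omega>. z \<omega> $ i * z \<omega> $ j)"
    "expectation (\<lambda>\<omega>. z \<omega> $ i * z \<omega> $ j) = (if i = j then \<sigma>\<^sup>2 else 0)"
proof -
  have int1: "integrable M (\<lambda>\<omega>. z \<omega> $ k)" for k
    using distributed_integrable_var[OF D _ integrable_normal_moment_nz_1[OF sp]] by simp
  have e1: "expectation (\<lambda>\<omega>. z \<omega> $ k) = 0" for k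
    by (rule normal_distributed_expectation[OF sp D])
  show "integrable M (\<lambda>\<omega>. z \<omega> $ i)" "expectation (\<lambda>\<omega>. z \<omega> $ i) = 0" using int1 e1 by auto
  have sq: "integrable M (\<lambda>\<omega>. z \<omega> $ k * z \<omega> $ k)" for k
  proof -
    have "integrable lborel (\<lambda>x. normal_density 0 \<sigma> x * (x - 0)^2)"
      by (rule integrable_normal_moment[OF sp])
    then have "integrable lborel (\<lambda>x. normal_density 0 \<sigma> x * (x * x))"
      by (simp add: power2_eq_square)
    then show ?thesis
      using distributed_integrable[OF D[of k], of "\<lambda>x. x * x"] by simp
  qed
  have sqe: "expectation (\<lambda>\<omega>. z \<omega> $ k * z \<omega> $ k) = \<sigma>\<^sup>2" for k
    using normal_distributed_variance[OF sp D[of k]] e1[of k] by (simp add: power2_eq_square)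
  have off: "integrable M (\<lambda>\<omega>. z \<omega> $ i * z \<omega> $ j) \<and> expectation (\<lambda>\<omega>. z \<omega> $ i * z \<omega> $ j) = 0"
    if "i \<noteq> j"
  proof -
    have ind2: "indep_vars (\<lambda>_. borel) (\<lambda>i \<omega>. z \<omega> $ i) {i, j}"
      by (rule indep_vars_subset[OF ind]) auto
    have pr: "(\<lambda>\<omega>. \<Prod>k\<in>{i,j}. z \<omega> $ k) = (\<lambda>\<omega>. z \<omega> $ i * z \<omega> $ j)"
      using that by auto
    have "integrable M (\<lambda>\<omega>. \<Prod>k\<in>{i,j}. z \<omega> $ k)"
      by (rule indep_vars_integrable[OF _ ind2]) (auto intro: int1)
    moreover have "expectation (\<lambda>\<omega>. \<Prod>k\<in>{i,j}. z \<omega> $ k) = (\<Prod>k\<in>{i,j}. expectation (\<lambda>\<omega>. z \<omega> $ k))"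
      by (rule indep_vars_lebesgue_integral[OF _ ind2]) (auto intro: int1)
    ultimately show ?thesis using pr e1 that by simp
  qed
  show "integrable M (\<lambda>\<omega>. z \<omega> $ i * z \<omega> $ j)"
    using sq off by (cases "i = j") auto
  show "expectation (\<lambda>\<omega>. z \<omega> $ i * z \<omega> $ j) = (if i = j then \<sigma>\<^sup>2 else 0)"
    using sqe off by (cases "i = j") auto
qed

end

context prob_space begin

lemma inner_sum_real: "(w::real^'n::finite) \<bullet> x = (\<Sum>i\<in>UNIV. w $ i * x $ i)"
  by (simp add: inner_vec_def)

lemma lin_mom:
  fixes z :: "'a \<Rightarrow> real^'n::finite"
  assumes sp: "\<sigma> > 0"
    and ind: "indep_vars (\<lambda>_. borel) (\<lambda>i \<omega>. z \<omega> $ i) UNIV"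
    and D: "\<And>i. distributed M lborel (\<lambda>\<omega>. z \<omega> $ i) (normal_density 0 \<sigma>)"
  shows "integrable M (\<lambda>\<omega>. w \<bullet> z \<omega>)" "expectation (\<lambda>\<omega>. w \<bullet> z \<omega>) = 0"
    "integrable M (\<lambda>\<omega>. (w \<bullet> z \<omega>) * (v \<bullet> z \<omega>))"
    "expectation (\<lambda>\<omega>. (w \<bullet> z \<omega>) * (v \<bullet> z \<omega>)) = \<sigma>\<^sup>2 * (w \<bullet> v)"
proof -
  note zm = zmom[OF sp ind D]
  show "integrable M (\<lambda>\<omega>. w \<bullet> z \<omega>)"
    unfolding inner_sum_real by (auto intro!: integrable_sum integrable_mult_right zm(1))
  show "expectation (\<lambda>\<omega>. w \<bullet> z \<omega>) = 0"
    unfolding inner_sum_real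
    by (simp add: integral_sum zm(1) zm(2))
  have eq: "(\<lambda>\<omega>. (w \<bullet> z \<omega>) * (v \<bullet> z \<omega>)) =
     (\<lambda>\<omega>. \<Sum>i\<in>UNIV. \<Sum>j\<in>UNIV. (w $ i * v $ j) * (z \<omega> $ i * z \<omega> $ j))"
    unfolding inner_sum_real sum_product by (auto simp: algebra_simps)
  show "integrable M (\<lambda>\<omega>. (w \<bullet> z \<omega>) * (v \<bullet> z \<omega>))"
    unfolding eq by (auto intro!: integrable_sum integrable_mult_right zm(3))
  have "expectation (\<lambda>\<omega>. (w \<bullet> z \<omega>) * (v \<bullet> z \<omega>)) =
     (\<Sum>i\<in>UNIV. \<Sum>j\<in>UNIV. (w $ i * v $ j) * (if i = j then \<sigma>\<^sup>2 else 0))"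
    unfolding eq
    by (simp add: integral_sum integrable_sum integrable_mult_right zm)
  also have "\<dots> = \<sigma>\<^sup>2 * (w \<bullet> v)"
    by (simp add: inner_sum_real sum_distrib_left algebra_simps if_distrib sum.delta cong: if_cong)
  finally show "expectation (\<lambda>\<omega>. (w \<bullet> z \<omega>) * (v \<bullet> z \<omega>)) = \<sigma>\<^sup>2 * (w \<bullet> v)" .
qed

lemma lin_gauss:
  fixes z :: "'a \<Rightarrow> real^'n::finite"
  assumes sp: "\<sigma> > 0"
    and ind: "indep_vars (\<lambda>_. borel) (\<lambda>i \<omega>. z \<omega> $ i) UNIV"
    and D: "\<And>i. distributed M lborel (\<lambda>\<omega>. z \<omega> $ i) (normal_density 0 \<sigma>)"
  shows "real_gaussian M (\<lambda>\<omega>. c + w \<bullet> z \<omega>)"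
proof (cases "w = 0")
  case True
  then show ?thesis unfolding real_gaussian_def by auto
next
  case False
  define I where "I = {i. w $ i \<noteq> 0}"
  have I: "finite I" "I \<noteq> {}" using False by (auto simp: I_def vec_eq_iff)
  define X where "X = (\<lambda>i \<omega>. w $ i * z \<omega> $ i)"
  have indX: "indep_vars (\<lambda>_. borel) X I"
    unfolding X_def
    by (rule indep_vars_compose2[where Y="\<lambda>i x. w $ i * x", OF indep_vars_subset[OF ind]]) auto
  have DX: "distributed M lborel (X i) (normal_density 0 (\<bar>w $ i\<bar> * \<sigma>))" if "i \<in> I" for i
    using normal_density_affine[OF D[of i] sp, of "w $ i" 0] that
    by (simp add: X_def I_def)
  have pos: "0 < \<bar>w $ i\<bar> * \<sigma>" if "i \<in> I" for i using that sp by (simp add: I_def)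
  have S: "distributed M lborel (\<lambda>x. \<Sum>i\<in>I. X i x)
     (normal_density (\<Sum>i\<in>I. 0) (sqrt (\<Sum>i\<in>I. (\<bar>w $ i\<bar> * \<sigma>)\<^sup>2)))"
    by (rule sum_indep_normal[OF I indX pos DX])
  define t where "t = sqrt (\<Sum>i\<in>I. (\<bar>w $ i\<bar> * \<sigma>)\<^sup>2)"
  have tpos: "t > 0" unfolding t_def
    by (intro real_sqrt_gt_zero sum_pos I) (use pos in \<open>auto simp: I_def\<close>)
  have S': "distributed M lborel (\<lambda>x. \<Sum>i\<in>I. X i x) (normal_density 0 t)"
    using S by (simp add: t_def)
  have "distributed M lborel (\<lambda>x. c + 1 * (\<Sum>i\<in>I. X i x)) (normal_density (c + 1 * 0) (\<bar>1\<bar> * t))"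
    by (rule normal_density_affine[OF S' tpos]) simp
  moreover have "(\<lambda>x. c + 1 * (\<Sum>i\<in>I. X i x)) = (\<lambda>\<omega>. c + w \<bullet> z \<omega>)"
  proof
    fix \<omega>
    have "(\<Sum>i\<in>I. X i \<omega>) = (\<Sum>i\<in>UNIV. w $ i * z \<omega> $ i)"
      unfolding X_def by (rule sum.mono_neutral_left) (auto simp: I_def)
    then show "c + 1 * (\<Sum>i\<in>I. X i \<omega>) = c + w \<bullet> z \<omega>" by (simp add: inner_sum_real)
  qed
  ultimately show ?thesis unfolding real_gaussian_def using tpos by auto
qed

end

context prob_space begin

lemma affine_props:
  fixes z :: "'a \<Rightarrow> real^'n::finite"
    and A :: "real^'n^'p::finite" and B :: "real^'n^'q::finite"
  assumes sp: "\<sigma> > 0"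
    and ind: "indep_vars (\<lambda>_. borel) (\<lambda>i \<omega>. z \<omega> $ i) UNIV"
    and D: "\<And>i. distributed M lborel (\<lambda>\<omega>. z \<omega> $ i) (normal_density 0 \<sigma>)"
    and u: "u = (\<lambda>\<omega>. c + A *v z \<omega>)"
    and v: "v = (\<lambda>\<omega>. d + B *v z \<omega>)"
  shows "mean_vec M u = c" "cov_mat M u v = \<sigma>\<^sup>2 *\<^sub>R (A ** transpose B)"
    "jointly_gaussian M u v"
proof -
  note lm = lin_mom[OF sp ind D]
  have mu: "mean_vec M u = c"
    if u: "u = (\<lambda>\<omega>. c + A *v z \<omega>)" for c :: "real^'k::finite" and A :: "real^'n^'k" and u
    unfolding mean_vec_def u
    by (simp add: vec_eq_iff matrix_vector_mul_component lm(1) lm(2) prob_space)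
  show "mean_vec M u = c" by (rule mu[OF u])
  show "cov_mat M u v = \<sigma>\<^sup>2 *\<^sub>R (A ** transpose B)"
    unfolding cov_mat_def mu[OF u] mu[OF v]
    by (simp add: vec_eq_iff u v matrix_vector_mul_component lm(4))
      (simp add: matrix_matrix_mult_def transpose_def inner_sum_real)
  show "jointly_gaussian M u v"
    unfolding jointly_gaussian_def
  proof (intro allI)
    fix a :: "real^'p" and b :: "real^'q"
    have "(\<lambda>\<omega>. a \<bullet> u \<omega> + b \<bullet> v \<omega>) = (\<lambda>\<omega>. (a \<bullet> c + b \<bullet> d) + (a v* A + b v* B) \<bullet> z \<omega>)"
      by (simp add: u v inner_add_right inner_add_left dot_lmul_matrix algebra_simps)
    then show "real_gaussian M (\<lambda>\<omega>. a \<bullet> u \<omega> + b \<bullet> v \<omega>)"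
      using lin_gauss[OF sp ind D] by simp
  qed
qed

end

lemma mm_add_r: "((A::real^'m^'n) + B) ** (C::real^'k^'m) = A ** C + B ** C"
  by (simp add: matrix_matrix_mult_def vec_eq_iff sum.distrib distrib_right)
lemma mm_diff_r: "((A::real^'m^'n) - B) ** (C::real^'k^'m) = A ** C - B ** C"
  by (simp add: matrix_matrix_mult_def vec_eq_iff sum_subtractf left_diff_distrib)
lemma mm_diff_l: "(C::real^'m^'n) ** ((A::real^'k^'m) - B) = C ** A - C ** B"
  by (simp add: matrix_matrix_mult_def vec_eq_iff sum_subtractf right_diff_distrib)
lemma mm_neg_r: "(C::real^'m^'n) ** (- (A::real^'k^'m)) = - (C ** A)"
  by (simp add: matrix_matrix_mult_def vec_eq_iff sum_negf)
lemma mm_neg_l: "(- (C::real^'m^'n)) ** (A::real^'k^'m) = - (C ** A)"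
  by (simp add: matrix_matrix_mult_def vec_eq_iff sum_negf)
lemma mm_scale_l: "(k *\<^sub>R (A::real^'m^'n)) ** (B::real^'k^'m) = k *\<^sub>R (A ** B)"
  by (simp add: matrix_matrix_mult_def vec_eq_iff sum_distrib_left mult.assoc)
lemma mm_scale_r: "(A::real^'m^'n) ** (k *\<^sub>R (B::real^'k^'m)) = k *\<^sub>R (A ** B)"
  by (simp add: matrix_matrix_mult_def vec_eq_iff sum_distrib_left algebra_simps)
lemma mv_neg_l: "(- (A::real^'m^'n)) *v v = - (A *v v)"
  by (simp add: matrix_vector_mult_def vec_eq_iff sum_negf)
lemma mv_neg_r: "(A::real^'m^'n) *v (- v) = - (A *v v)"
  by (simp add: matrix_vector_mult_def vec_eq_iff sum_negf)
lemma tr_add: "transpose ((A::real^'m^'n) + B) = transpose A + transpose B"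
  by (simp add: transpose_def vec_eq_iff)
lemma tr_diff: "transpose ((A::real^'m^'n) - B) = transpose A - transpose B"
  by (simp add: transpose_def vec_eq_iff)
lemma col_inner: "column j (M::real^'m^'n) \<bullet> v = (transpose M *v v) $ j"
  by (simp add: column_def transpose_def matrix_vector_mult_def inner_vec_def mult.commute)
lemma diag_mv: "(diag_part A *v v) $ j = A $ j $ j * v $ j"
  proof -
  have "(\<Sum>k\<in>UNIV. (if j = k then A $ j $ k else 0) * v $ k) = (\<Sum>k\<in>UNIV. if j = k then A $ j $ k * v $ k else 0)"
    by (rule sum.cong) auto
  then show ?thesis by (simp add: diag_part_def matrix_vector_mult_def)
qed
lemma tr_diag_part: "transpose (diag_part A) = diag_part A"
  by (simp add: diag_part_def transpose_def vec_eq_iff)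
lemma tr_diag_mat: "transpose (diag_mat s) = diag_mat s"
  by (simp add: diag_mat_def transpose_def vec_eq_iff)

lemma matrix_inv_props:
  fixes A :: "real^'n^'n"
  assumes "invertible A"
  shows "A ** matrix_inv A = mat 1" "matrix_inv A ** A = mat 1"
proof -
  from assms obtain A' :: "real^'n^'n" where "A ** A' = mat 1 \<and> A' ** A = mat 1"
    unfolding invertible_def by blast
  then have "A ** matrix_inv A = mat 1 \<and> matrix_inv A ** A = mat 1"
    unfolding matrix_inv_def by (rule someI)
  then show "A ** matrix_inv A = mat 1" "matrix_inv A ** A = mat 1" by auto
qed

theorem proposition2p1:
  fixes M :: "'a measure"
    and X Xt :: "real^'p::finite^'n::finite"
    and \<beta> s :: "real^'p"
    and z :: "'a \<Rightarrow> real^'n"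
    and \<sigma> lam :: real
  assumes "prob_space M"
    and "\<sigma> > 0"
    and "prob_space.indep_vars M (\<lambda>_. borel) (\<lambda>i \<omega>. z \<omega> $ i) UNIV"
    and "\<And>i. distributed M lborel (\<lambda>\<omega>. z \<omega> $ i) (normal_density 0 \<sigma>)"
    and "rank X = CARD('p)"
    and "\<And>j. norm (column j X) = 1"
    and "lam > 0"
    and "\<And>j. s $ j \<ge> 0"
    and "psd (transpose X ** X - diag_mat s)"
    and "transpose Xt ** X = transpose X ** X - diag_mat s"
    and "\<And>j. column j Xt \<bullet> column j Xt = 1"
  defines "Sig \<equiv> transpose X ** X"
    and "S \<equiv> diag_mat s"
  defines "SL \<equiv> Sig + lam *\<^sub>R mat 1"
  defines "SLi \<equiv> matrix_inv SL"
  defines "y \<equiv> (\<lambda>\<omega>. X *v \<beta> + z \<omega>)"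
  defines "\<beta>hat \<equiv> (\<lambda>\<omega>. SLi *v (transpose X *v y \<omega>))"
  defines "\<beta>tilde \<equiv> (\<lambda>\<omega>. \<chi> j. \<beta>hat \<omega> $ j
                 + SLi $ j $ j * (column j Xt \<bullet> y \<omega> - column j X \<bullet> y \<omega>))"
  shows "jointly_gaussian M \<beta>hat \<beta>tilde
    \<and> mean_vec M \<beta>hat = (SLi ** Sig) *v \<beta>
    \<and> mean_vec M \<beta>tilde = (SLi ** Sig - diag_part SLi ** S) *v \<beta>
    \<and> cov_mat M \<beta>hat \<beta>hat = \<sigma>\<^sup>2 *\<^sub>R (SLi ** Sig ** SLi)
    \<and> cov_mat M \<beta>tilde \<beta>tilde = \<sigma>\<^sup>2 *\<^sub>R (SLi ** Sig ** SLi
          - SLi ** S ** diag_part SLi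
          - diag_part SLi ** S ** SLi
          + diag_part SLi ** (transpose Xt ** Xt - Sig + 2 *\<^sub>R S) ** diag_part SLi)
    \<and> cov_mat M \<beta>tilde \<beta>hat = \<sigma>\<^sup>2 *\<^sub>R (SLi ** Sig ** SLi - diag_part SLi ** S ** SLi)"
proof -
  interpret P: prob_space M by fact
  note zassm = assms(2) assms(3) assms(4)
  define D where "D = diag_part SLi"
  define W where "W = transpose Xt - transpose X"
  define A where "A = SLi ** transpose X"
  define B where "B = A + D ** W"
  define ch where "ch = SLi *v (transpose X *v (X *v \<beta>))"
  define ct where "ct = ch + D *v (W *v (X *v \<beta>))"
  have trSig: "transpose Sig = Sig" unfolding Sig_def by (simp add: matrix_transpose_mul)
  have trS: "transpose S = S" unfolding S_def by (rule tr_diag_mat)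
  have trD: "transpose D = D" unfolding D_def by (rule tr_diag_part)
  have trSL: "transpose SL = SL" unfolding SL_def by (simp add: tr_add trSig transpose_scalar)
  have ker: "v = 0" if "SL *v v = 0" for v
  proof -
    have q: "v \<bullet> (Sig *v v) = (X *v v) \<bullet> (X *v v)"
    proof -
      have "v \<bullet> (Sig *v v) = v \<bullet> ((X *v v) v* X)"
        unfolding Sig_def by (simp add: matrix_vector_mul_assoc[symmetric])
      also have "\<dots> = ((X *v v) v* X) \<bullet> v" by (rule inner_commute)
      also have "\<dots> = (X *v v) \<bullet> (X *v v)" by (rule dot_lmul_matrix)
      finally show ?thesis .
    qed
    have "v \<bullet> (SL *v v) = (X *v v) \<bullet> (X *v v) + lam * (v \<bullet> v)"
      unfolding SL_def
      by (simp add: matrix_vector_mult_add_rdistrib inner_add_right q scaleR_matrix_vector_assoc[symmetric])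
    then have "(X *v v) \<bullet> (X *v v) + lam * (v \<bullet> v) = 0" using that by simp
    moreover have "0 \<le> (X *v v) \<bullet> (X *v v)" by simp
    moreover have "0 \<le> v \<bullet> v" by simp
    moreover have "0 \<le> lam * (v \<bullet> v)" using assms(7) by simp
    ultimately have "lam * (v \<bullet> v) = 0" by linarith
    then have "v \<bullet> v = 0" using assms(7) by simp
    then show ?thesis by simp
  qed
  have inv: "invertible SL"
    using matrix_left_invertible_ker[of SL] ker invertible_left_inverse by blast
  have SLi1: "SL ** SLi = mat 1" and SLi2: "SLi ** SL = mat 1"
    unfolding SLi_def using matrix_inv_props[OF inv] by auto
  have trSLi: "transpose SLi = SLi"
  proof -
    have "transpose SLi ** SL = mat 1"
      using arg_cong[OF SLi1, of transpose] by (simp add: matrix_transpose_mul trSL)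
    then have "transpose SLi ** SL ** SLi = SLi" by simp
    then show ?thesis by (simp add: matrix_mul_assoc[symmetric] SLi1)
  qed
  have hat: "\<beta>hat = (\<lambda>\<omega>. ch + A *v z \<omega>)"
    unfolding \<beta>hat_def y_def ch_def A_def
    by (simp add: matrix_vector_right_distrib matrix_vector_mul_assoc del: transpose_matrix_vector)
  have til: "\<beta>tilde = (\<lambda>\<omega>. ct + B *v z \<omega>)"
  proof
    fix \<omega>
    have "\<beta>tilde \<omega> = \<beta>hat \<omega> + D *v (W *v y \<omega>)"
      unfolding \<beta>tilde_def
      by (simp add: vec_eq_iff col_inner diag_mv D_def W_def matrix_vector_mult_diff_rdistrib del: transpose_matrix_vector)
    also have "\<dots> = ct + B *v z \<omega>"
      unfolding hat ct_def B_def y_def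
      by (simp add: matrix_vector_right_distrib matrix_vector_mult_add_rdistrib matrix_vector_mul_assoc algebra_simps del: transpose_matrix_vector)
    finally show "\<beta>tilde \<omega> = ct + B *v z \<omega>" .
  qed
  note af = P.affine_props[OF zassm]
  have XtX: "transpose Xt ** X = Sig - S" using assms(10) unfolding Sig_def S_def by simp
  have XXt: "transpose X ** Xt = Sig - S"
    using arg_cong[OF XtX, of transpose] by (simp add: matrix_transpose_mul tr_diff trSig trS)
  have XX: "transpose X ** X = Sig" unfolding Sig_def ..
  have WX: "W ** X = - S" unfolding W_def by (simp add: mm_diff_r XtX XX)
  have m1: "ch = (SLi ** Sig) *v \<beta>"
    unfolding ch_def by (simp add: matrix_vector_mul_assoc XX del: transpose_matrix_vector)
  have m2: "ct = (SLi ** Sig - D ** S) *v \<beta>"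
    unfolding ct_def m1 by (simp add: matrix_vector_mul_assoc WX mm_neg_r mv_neg_l mv_neg_r matrix_vector_mult_diff_rdistrib)
  have XX': "transpose X ** (X ** C) = Sig ** C" for C :: "real^'k^'p"
    by (simp add: matrix_mul_assoc XX)
  have XtX': "transpose Xt ** (X ** C) = (Sig - S) ** C" for C :: "real^'k^'p"
    by (simp add: matrix_mul_assoc XtX)
  have XXt': "transpose X ** (Xt ** C) = (Sig - S) ** C" for C :: "real^'k^'p"
    by (simp add: matrix_mul_assoc XXt)
  note ms = matrix_mul_assoc[symmetric] mm_add_r matrix_add_ldistrib mm_diff_r mm_diff_l
    mm_neg_r mm_neg_l mm_scale_l mm_scale_r matrix_transpose_mul tr_add tr_diff transpose_transpose
    trSLi trD trS trSig XX XtX XXt XX' XtX' XXt' A_def B_def W_def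
  have c1: "A ** transpose A = SLi ** Sig ** SLi"
    by (simp add: ms)
  have c2: "B ** transpose A = SLi ** Sig ** SLi - D ** S ** SLi"
    by (simp add: ms algebra_simps)
  have c3: "B ** transpose B = SLi ** Sig ** SLi - SLi ** S ** D - D ** S ** SLi
          + D ** (transpose Xt ** Xt - Sig + 2 *\<^sub>R S) ** D"
    unfolding scaleR_2 by (simp only: ms) (simp add: algebra_simps)
  show ?thesis
    unfolding D_def[symmetric]
    using af[OF hat hat] af[OF hat til] af[OF til til] af[OF til hat] m1 m2 c1 c2 c3
    by simp
qed
end
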